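(* Let $G$ be a finite graph of maximum degree $\Delta$, $\mathcal F\subseteq\mathcal F_1$ finite, $\pi\colon V(G)\to\mathcal F$, and $r_1=\max\{1,r(\mathcal F)\}$. Then for every $z\in\mathbb C$ with $|z|\le\big(\Delta e^{2}r_1(r_1+1)\big)^{-1}$ we have $Z_{\mathcal F}(G,\pi,z)\neq0$ and the Taylor series of $\log Z_{\mathcal F}(G,\pi,z)$ in $z$ about $0$ converges absolutely at $z$.
   Context: Boolean signatures: $f\colon\{0,1\}^d\to\mathbb C$. $\mathcal F_1=\{f\mid f(\mathbf0)=1\}$; $r(f)=\max_{x\in\{0,1\}^d\setminus\{\mathbf0\}}|f(x)|$ and $r(\mathcal F)=\max_{f\in\mathcal F}r(f)$. For a finite graph $G=(V,E)$ with a fixed order on $E$, $E(v)$ is the set of edges at $v$, $\pi$ assigns to $v$ a signature $f_v$ of arity $|E(v)|$, and $\sigma|_{E(v)}$ is the restriction of $\sigma\in\{0,1\}^E$ to $E(v)$. The (univariate) Boolean Holant polynomial is $Z_{\mathcal F}(G,\pi,z)=\sum_{\sigma\in\{0,1\}^E}\prod_{v\in V}f_v(\sigma|_{E(v)})\,z^{|\{e:\sigma(e)=1\}|}$; it has constant term $1$. *)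

theory Defs
  imports "HOL-Analysis.Analysis"
begin

text \<open>A Boolean signature is a pair (d, f) of an arity d and a function f on
  Boolean tuples; only the values of f on lists of length d matter.\<close>
type_synonym sig = "nat \<times> (bool list \<Rightarrow> complex)"

definition sig_arity :: "sig \<Rightarrow> nat" where "sig_arity s = fst s"
definition sig_fun :: "sig \<Rightarrow> bool list \<Rightarrow> complex" where "sig_fun s = snd s"

definition in_F1 :: "sig \<Rightarrow> bool" where
  "in_F1 s \<longleftrightarrow> sig_fun s (replicate (sig_arity s) False) = 1"

text \<open>r(f) = max over nonzero inputs of |f(x)| (0 for arity 0, an empty max).\<close>
definition sig_r :: "sig \<Rightarrow> real" where
  "sig_r s = Max (insert 0 {cmod (sig_fun s x) | x. length x = sig_arity s
                     \<and> x \<noteq> replicate (sig_arity s) False})"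

definition fam_r :: "sig set \<Rightarrow> real" where
  "fam_r F = Max (insert 0 (sig_r ` F))"

text \<open>Loopless multigraph: vertex set V, edge set E (edges linearly ordered by
  the type's order), endpoints ends e, a 2-element subset of V.\<close>
definition is_graph :: "'v set \<Rightarrow> ('e::linorder) set \<Rightarrow> ('e \<Rightarrow> 'v set) \<Rightarrow> bool" where
  "is_graph V E ends \<longleftrightarrow> finite V \<and> finite E \<and> (\<forall>e\<in>E. ends e \<subseteq> V \<and> card (ends e) = 2)"

definition edges_at :: "('e::linorder) set \<Rightarrow> ('e \<Rightarrow> 'v set) \<Rightarrow> 'v \<Rightarrow> 'e set" where
  "edges_at E ends v = {e\<in>E. v \<in> ends e}"

definition max_degree :: "'v set \<Rightarrow> ('e::linorder) set \<Rightarrow> ('e \<Rightarrow> 'v set) \<Rightarrow> nat" where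
  "max_degree V E ends = Max (insert 0 ((\<lambda>v. card (edges_at E ends v)) ` V))"

text \<open>Univariate Boolean Holant polynomial. sigma|_{E(v)} is the tuple of values of
  sigma on E(v), listed in the fixed edge order.\<close>
definition holant_Z :: "'v set \<Rightarrow> ('e::linorder) set \<Rightarrow> ('e \<Rightarrow> 'v set) \<Rightarrow> ('v \<Rightarrow> sig)
     \<Rightarrow> complex \<Rightarrow> complex" where
  "holant_Z V E ends \<pi> z =
     (\<Sum>\<sigma>\<in>PiE E (\<lambda>_. UNIV).
        (\<Prod>v\<in>V. sig_fun (\<pi> v) (map \<sigma> (sorted_list_of_set (edges_at E ends v))))
        * z ^ card {e\<in>E. \<sigma> e})"

definition log_taylor_coeff :: "(complex \<Rightarrow> complex) \<Rightarrow> nat \<Rightarrow> complex" where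
  "log_taylor_coeff f n = (deriv ^^ n) (\<lambda>w. Ln (f w)) 0 / fact n"

end

theory Submission
  imports Defs "HOL-Complex_Analysis.Complex_Analysis"
begin


lemma log_series_summable:
  fixes Z :: "complex \<Rightarrow> complex"
  assumes hol: "Z holomorphic_on UNIV" and Z0: "Z 0 = 1"
    and Rz: "cmod z < R" and nz: "\<And>w. w \<in> ball 0 R \<Longrightarrow> Z w \<noteq> 0"
  shows "summable (\<lambda>n. cmod ((deriv ^^ n) (\<lambda>w. Ln (Z w)) 0 / fact n * z ^ n))"
proof -
  have Rpos: "0 < R" using Rz norm_ge_zero[of z] by linarith
  obtain g where gh: "g holomorphic_on ball 0 R" and ge: "\<And>x. x \<in> ball 0 R \<Longrightarrow> exp (g x) = Z x"
    using holomorphic_logarithm_exists[of "ball 0 R" Z 0] hol nz Rpos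
    by (metis convex_ball open_ball holomorphic_on_subset subset_UNIV centre_in_ball)
  have R0: "0 \<in> ball 0 R" using Rpos by simp
  define g' where "g' = (\<lambda>x. g x - g 0)"
  have g'h: "g' holomorphic_on ball 0 R" unfolding g'_def by (intro holomorphic_intros gh)
  have g'e: "exp (g' x) = Z x" if "x \<in> ball 0 R" for x
    using ge[OF that] ge[OF R0] Z0 by (simp add: g'_def exp_diff)
  define h where "h = (\<lambda>x. g' x - Ln (Z x))"
  have contZ: "isCont Z 0" using hol
    by (meson continuous_on_eq_continuous_at holomorphic_on_imp_continuous_on open_UNIV UNIV_I)
  have contg: "isCont g' 0"
    using g'h R0 by (meson continuous_on_eq_continuous_at holomorphic_on_imp_continuous_on open_ball)
  have conth: "isCont h 0" unfolding h_def
    using contg contZ Z0 by (intro continuous_intros) (auto simp: complex_nonpos_Reals_iff)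
  have h0: "h 0 = 0" by (simp add: h_def g'_def Z0)
  obtain d where d: "d > 0" "\<And>x. dist x 0 < d \<Longrightarrow> dist (h x) (h 0) < 2*pi"
    using conth unfolding continuous_at_eps_delta by (meson pi_gt_zero mult_pos_pos zero_less_numeral)
  define d' where "d' = min d (R - cmod z)"
  have d'0: "d' > 0" using d Rz by (simp add: d'_def)
  have hz: "h x = 0" if x: "x \<in> ball 0 d'" for x
  proof -
    have "cmod x < R - cmod z" using x by (simp add: d'_def)
    then have "cmod x < R" using norm_ge_zero[of z] by linarith
    then have xR: "x \<in> ball 0 R" by simp
    have Znz: "Z x \<noteq> 0" using nz xR by blast
    have "exp (h x) = 1" using g'e[OF xR] Znz by (simp add: h_def exp_diff)
    then obtain n::int where re: "Re (h x) = 0" and im: "Im (h x) = of_int (2*n) * pi"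
      using exp_eq_1 by blast
    have "cmod (h x) < 2*pi" using d(2)[of x] x h0 by (auto simp: d'_def dist_norm)
    then have "\<bar>Im (h x)\<bar> < 2*pi" using abs_Im_le_cmod le_less_trans by blast
    then have "\<bar>of_int (2*n) * pi\<bar> < 2 * pi" using im by simp
    then have "\<bar>real_of_int n\<bar> < 1" by (simp add: abs_mult)
    then have "n = 0" by linarith
    then show ?thesis using re im by (simp add: complex_eq_iff)
  qed
  have ev: "eventually (\<lambda>x. Ln (Z x) = g' x) (nhds 0)"
    using hz d'0 unfolding eventually_nhds
    by (intro exI[of _ "ball 0 d'"]) (auto simp: h_def)
  have co: "(deriv ^^ n) (\<lambda>w. Ln (Z w)) 0 = (deriv ^^ n) g' 0" for n
    by (rule higher_deriv_cong_ev[OF ev refl])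
  define R' where "R' = (cmod z + R) / 2"
  have R'p: "R' \<ge> 0" "R' < R" "cmod z < R'" using Rz Rpos unfolding R'_def by auto
  have nR: "cmod (of_real R' :: complex) = R'" using R'p by simp
  have R'R: "of_real R' \<in> ball (0::complex) R" "cmod z < cmod (of_real R' :: complex)"
    using R'p nR by auto
  have "(\<lambda>n. (deriv ^^ n) g' 0 / fact n * (of_real R' - 0)^n) sums g' (of_real R')"
    by (rule holomorphic_power_series[OF g'h R'R(1)])
  then have "summable (\<lambda>n. (deriv ^^ n) g' 0 / fact n * (of_real R')^n)"
    by (simp add: sums_summable)
  from powser_insidea[OF this R'R(2)] show ?thesis by (simp add: co)
qed



definition touch :: "'e set \<Rightarrow> ('e \<Rightarrow> 'v set) \<Rightarrow> 'v \<Rightarrow> bool" where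
  "touch S ends v \<longleftrightarrow> (\<exists>g\<in>S. v \<in> ends g)"
definition vadj :: "'e set \<Rightarrow> ('e \<Rightarrow> 'v set) \<Rightarrow> 'v \<Rightarrow> 'v \<Rightarrow> bool" where
  "vadj S ends p q \<longleftrightarrow> (\<exists>g\<in>S. p \<in> ends g \<and> q \<in> ends g)"
abbreviation vreach where "vreach S ends \<equiv> (vadj S ends)\<^sup>*\<^sup>*"
definition rooted :: "('e \<Rightarrow> 'v set) \<Rightarrow> 'e set \<Rightarrow> 'v \<Rightarrow> bool" where
  "rooted ends R v \<longleftrightarrow> (\<forall>g\<in>R. \<exists>p\<in>ends g. vreach R ends v p)"
definition ecomp :: "('e \<Rightarrow> 'v set) \<Rightarrow> 'e set \<Rightarrow> 'v \<Rightarrow> 'e set" where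
  "ecomp ends S v = {g\<in>S. \<exists>p\<in>ends g. vreach S ends v p}"

lemma vreach_mono: "vreach X ends p q \<Longrightarrow> X \<subseteq> Y \<Longrightarrow> vreach Y ends p q"
proof (induction rule: rtranclp_induct)
  case (step q r) then show ?case
    by (metis (no_types, lifting) rtranclp.rtrancl_into_rtrancl subsetD vadj_def)
qed simp

lemma comp_sub: "ecomp ends S v \<subseteq> S" by (auto simp: ecomp_def)

lemma vreach_comp: "vreach S ends v q \<Longrightarrow> vreach (ecomp ends S v) ends v q"
proof (induction rule: rtranclp_induct)
  case (step q r)
  then obtain g where g: "g \<in> S" "q \<in> ends g" "r \<in> ends g" by (auto simp: vadj_def)
  have "g \<in> ecomp ends S v" using g step.hyps(1) by (auto simp: ecomp_def)
  then have "vadj (ecomp ends S v) ends q r" using g by (auto simp: vadj_def)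
  then show ?case using step.IH by (meson rtranclp.rtrancl_into_rtrancl)
qed simp

lemma comp_rooted: "rooted ends (ecomp ends S v) v"
  unfolding rooted_def using vreach_comp by (fastforce simp: ecomp_def)

lemma rooted_edge_at_root:
  assumes "rooted ends R v" "g \<in> R" shows "\<exists>h\<in>R. v \<in> ends h"
proof -
  obtain p where p: "p \<in> ends g" "vreach R ends v p" using assms by (auto simp: rooted_def)
  from p(2) show ?thesis
  proof (cases rule: converse_rtranclpE)
    case base then show ?thesis using p assms by auto
  next
    case (step q) then show ?thesis by (auto simp: vadj_def)
  qed
qed

lemma split_inv:
  assumes e: "e \<in> R" "ends e = {v,u}"
  shows "vreach R ends v q \<Longrightarrow> vreach (R - {e}) ends v q
     \<or> vreach (R - {e} - ecomp ends (R - {e}) v) ends u q"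
proof (induction rule: rtranclp_induct)
  case base then show ?case by simp
next
  case (step q r)
  then obtain g where g: "g \<in> R" "q \<in> ends g" "r \<in> ends g" by (auto simp: vadj_def)
  let ?R1 = "ecomp ends (R - {e}) v" and ?R2 = "R - {e} - ecomp ends (R - {e}) v"
  show ?case
  proof (cases "g = e")
    case True then show ?thesis using g e by auto
  next
    case ne: False
    show ?thesis
    proof (cases "vreach (R - {e}) ends v q")
      case True
      then have "vreach (R - {e}) ends v r" using g ne
        by (metis (no_types, lifting) Diff_iff rtranclp.rtrancl_into_rtrancl singletonD vadj_def)
      then show ?thesis by simp
    next
      case False
      then have q2: "vreach ?R2 ends u q" using step.IH by simp
      show ?thesis
      proof (cases "g \<in> ?R1")
        case True
        then obtain p where p: "p \<in> ends g" "vreach (R - {e}) ends v p" by (auto simp: ecomp_def)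
        have "vadj (R - {e}) ends p q" using p g ne by (auto simp: vadj_def)
        then have "vreach (R - {e}) ends v q" using p(2) by (meson rtranclp.rtrancl_into_rtrancl)
        then show ?thesis using False by simp
      next
        case nR1: False
        have "vadj ?R2 ends q r" using g ne nR1 by (auto simp: vadj_def)
        then show ?thesis using q2 by (meson rtranclp.rtrancl_into_rtrancl)
      qed
    qed
  qed
qed

lemma split_rooted:
  assumes "rooted ends R v" "e \<in> R" "ends e = {v,u}"
  shows "rooted ends (R - {e} - ecomp ends (R - {e}) v) u"
  unfolding rooted_def
proof
  fix g assume g: "g \<in> R - {e} - ecomp ends (R - {e}) v"
  then obtain p where p: "p \<in> ends g" "vreach R ends v p" using assms(1) by (auto simp: rooted_def)
  have "\<not> vreach (R - {e}) ends v p" using g p(1) by (auto simp: ecomp_def)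
  then show "\<exists>p\<in>ends g. vreach (R - {e} - ecomp ends (R - {e}) v) ends u p"
    using split_inv[OF assms(2,3) p(2)] p(1) by blast
qed


definition verts :: "('e \<Rightarrow> 'v set) \<Rightarrow> 'e set \<Rightarrow> 'v set" where
  "verts ends R = \<Union>(ends ` R)"
definition Rt :: "('e \<Rightarrow> 'v set) \<Rightarrow> 'e set \<Rightarrow> 'v \<Rightarrow> 'e set set" where
  "Rt ends A v = {R. R \<subseteq> A \<and> rooted ends R v}"
definition wt :: "('e \<Rightarrow> 'v set) \<Rightarrow> real \<Rightarrow> real \<Rightarrow> 'v \<Rightarrow> 'e set \<Rightarrow> real" where
  "wt ends y \<rho> v R = y ^ card R * \<rho> ^ card (verts ends R \<union> {v})"

lemma finite_Rt: "finite A \<Longrightarrow> finite (Rt ends A v)"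
  by (rule finite_subset[of _ "Pow A"]) (auto simp: Rt_def)

lemma wt_nonneg: "y \<ge> 0 \<Longrightarrow> \<rho> \<ge> 0 \<Longrightarrow> wt ends y \<rho> v R \<ge> 0"
  by (simp add: wt_def)

lemma split_sum:
  assumes A: "finite A" "e \<in> A" "ends e = {v,u}" "\<forall>g\<in>A. finite (ends g)"
    and y: "y \<ge> 0" and \<rho>: "\<rho> \<ge> 1"
  shows "sum (wt ends y \<rho> v) {R\<in>Rt ends A v. e \<in> R}
     \<le> y * (sum (wt ends y \<rho> v) (Rt ends (A-{e}) v) * sum (wt ends y \<rho> u) (Rt ends (A-{e}) u))"
proof -
  let ?T = "Rt ends (A-{e}) v \<times> Rt ends (A-{e}) u"
  have rhs: "y * (sum (wt ends y \<rho> v) (Rt ends (A-{e}) v) * sum (wt ends y \<rho> u) (Rt ends (A-{e}) u))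
      = sum (\<lambda>(R1,R2). y * (wt ends y \<rho> v R1 * wt ends y \<rho> u R2)) ?T"
  proof -
    have "(\<Sum>p\<in>?T. wt ends y \<rho> v (fst p) * wt ends y \<rho> u (snd p))
        = sum (wt ends y \<rho> v) (Rt ends (A-{e}) v) * sum (wt ends y \<rho> u) (Rt ends (A-{e}) u)"
      by (simp add: sum.cartesian_product' sum_product)
    then show ?thesis by (simp only: case_prod_unfold sum_distrib_left[symmetric])
  qed
  have "sum (wt ends y \<rho> v) {R\<in>Rt ends A v. e \<in> R}
      \<le> sum (\<lambda>(R1,R2). y * (wt ends y \<rho> v R1 * wt ends y \<rho> u R2)) ?T"
  proof (rule sum_le_included[where i = "\<lambda>(R1,R2). insert e (R1 \<union> R2)"])
    show "finite {R\<in>Rt ends A v. e \<in> R}" using finite_Rt[OF A(1), of ends v] by simp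
    show "finite ?T" using A(1) by (simp add: finite_Rt)
    show "\<forall>p\<in>?T. 0 \<le> (\<lambda>(R1,R2). y * (wt ends y \<rho> v R1 * wt ends y \<rho> u R2)) p"
      using y \<rho> by (auto intro!: mult_nonneg_nonneg wt_nonneg)
    show "\<forall>R\<in>{R\<in>Rt ends A v. e \<in> R}. \<exists>p\<in>?T. (\<lambda>(R1,R2). insert e (R1 \<union> R2)) p = R \<and>
        wt ends y \<rho> v R \<le> (\<lambda>(R1,R2). y * (wt ends y \<rho> v R1 * wt ends y \<rho> u R2)) p"
    proof
      fix R assume R: "R \<in> {R\<in>Rt ends A v. e \<in> R}"
      define R1 where "R1 = ecomp ends (R - {e}) v"
      define R2 where "R2 = R - {e} - R1"
      have RA: "R \<subseteq> A" "rooted ends R v" "e \<in> R" using R by (auto simp: Rt_def)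
      have R1s: "R1 \<subseteq> R - {e}" unfolding R1_def by (rule comp_sub)
      have inT: "(R1, R2) \<in> ?T"
        using RA R1s comp_rooted[of ends "R - {e}" v] split_rooted[OF RA(2,3) A(3)]
        by (auto simp: Rt_def R1_def R2_def)
      have Req: "insert e (R1 \<union> R2) = R" using R1s RA(3) by (auto simp: R2_def)
      have finR: "finite R" using RA(1) A(1) finite_subset by blast
      have finR1: "finite R1" "finite R2" using finR R1s finite_subset by (auto simp: R2_def)
      have cR: "card R = Suc (card R1 + card R2)"
      proof -
        have "card R = card (insert e (R1 \<union> R2))" using Req by simp
        also have "\<dots> = Suc (card (R1 \<union> R2))"
        proof (rule card_insert_disjoint)
          show "finite (R1 \<union> R2)" using finR1 by simp
          show "e \<notin> R1 \<union> R2" using R1s by (auto simp: R2_def)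
        qed
        also have "card (R1 \<union> R2) = card R1 + card R2"
          using finR1 by (intro card_Un_disjoint) (auto simp: R2_def)
        finally show ?thesis .
      qed
      have finv: "finite (verts ends X)" if "X \<subseteq> A" "finite X" for X
        using that A(4) by (auto simp: verts_def)
      have vsub: "verts ends R \<union> {v} \<subseteq> (verts ends R1 \<union> {v}) \<union> (verts ends R2 \<union> {u})"
        using A(3) Req[symmetric] by (auto simp: verts_def)
      have cV: "card (verts ends R \<union> {v}) \<le> card (verts ends R1 \<union> {v}) + card (verts ends R2 \<union> {u})"
      proof -
        have f1: "finite (verts ends R1 \<union> {v})" "finite (verts ends R2 \<union> {u})"
        proof -
          have "R1 \<subseteq> A" "R2 \<subseteq> A" using R1s RA(1) by (auto simp: R2_def)
          then show "finite (verts ends R1 \<union> {v})" "finite (verts ends R2 \<union> {u})"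
            using finv finR1 by auto
        qed
        have "card (verts ends R \<union> {v}) \<le> card ((verts ends R1 \<union> {v}) \<union> (verts ends R2 \<union> {u}))"
          using f1 vsub by (intro card_mono) auto
        also have "\<dots> \<le> card (verts ends R1 \<union> {v}) + card (verts ends R2 \<union> {u})"
          by (rule card_Un_le)
        finally show ?thesis .
      qed
      have "wt ends y \<rho> v R = y * (y ^ card R1 * y ^ card R2) * \<rho> ^ card (verts ends R \<union> {v})"
        by (simp add: wt_def cR power_add)
      also have "\<dots> \<le> y * (y ^ card R1 * y ^ card R2) * \<rho> ^ (card (verts ends R1 \<union> {v}) + card (verts ends R2 \<union> {u}))"
        using y \<rho> cV by (intro mult_left_mono power_increasing) auto
      also have "\<dots> = y * (wt ends y \<rho> v R1 * wt ends y \<rho> u R2)"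
        by (simp add: wt_def power_add mult_ac)
      finally show "\<exists>p\<in>?T. (\<lambda>(R1,R2). insert e (R1 \<union> R2)) p = R \<and>
        wt ends y \<rho> v R \<le> (\<lambda>(R1,R2). y * (wt ends y \<rho> v R1 * wt ends y \<rho> u R2)) p"
        using inT Req by (intro bexI[of _ "(R1,R2)"]) auto
    qed
  qed
  then show ?thesis using rhs by simp
qed


lemma card2_other: "card S = 2 \<Longrightarrow> v \<in> S \<Longrightarrow> \<exists>u. S = {v,u} \<and> u \<noteq> v"
  by (metis card_2_iff doubleton_eq_iff insertE singletonD)

lemma H_bound:
  assumes fin: "finite A" and cE: "\<forall>g\<in>A. card (ends g) = 2"
    and deg: "\<forall>p. card {g\<in>A. p \<in> ends g} \<le> \<Delta>"
    and y: "y \<ge> 0" and \<rho>: "\<rho> \<ge> 1" and B: "B \<ge> 0" and hB: "\<rho> * (1 + y*B)^\<Delta> \<le> B"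
  shows "A' \<subseteq> A \<Longrightarrow> sum (wt ends y \<rho> v) (Rt ends A' v) \<le> \<rho> * (1+y*B)^card {g\<in>A'. v \<in> ends g}"
proof (induction "card A'" arbitrary: A' v rule: less_induct)
  case less
  have finA': "finite A'" using less.prems fin finite_subset by blast
  show ?case
  proof (cases "\<exists>e\<in>A'. v \<in> ends e")
    case False
    have r1: "Rt ends A' v = {{}}"
    proof -
      have "R = {}" if "R \<in> Rt ends A' v" for R
        using that rooted_edge_at_root[of ends R v] False by (auto simp: Rt_def)
      moreover have "{} \<in> Rt ends A' v" by (simp add: Rt_def rooted_def)
      ultimately show ?thesis by blast
    qed
    have r2: "{g\<in>A'. v \<in> ends g} = {}" using False by auto
    show ?thesis unfolding r1 r2 by (simp add: wt_def verts_def)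
  next
    case True
    then obtain e where e: "e \<in> A'" "v \<in> ends e" by blast
    obtain u where u: "ends e = {v,u}" "u \<noteq> v" using card2_other[of "ends e" v] cE e less.prems by auto
    have sub: "A' - {e} \<subseteq> A" using less.prems by auto
    have cl: "card (A' - {e}) < card A'" using e finA' by (meson card_Diff1_less)
    let ?q = "1 + y*B"
    have q0: "?q \<ge> 0" using y B by simp
    have IHv: "sum (wt ends y \<rho> v) (Rt ends (A'-{e}) v) \<le> \<rho> * ?q^card {g\<in>A'-{e}. v \<in> ends g}"
      using less.hyps[OF cl sub] .
    have IHu: "sum (wt ends y \<rho> u) (Rt ends (A'-{e}) u) \<le> B"
    proof -
      have "sum (wt ends y \<rho> u) (Rt ends (A'-{e}) u) \<le> \<rho> * ?q^card {g\<in>A'-{e}. u \<in> ends g}"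
        using less.hyps[OF cl sub] .
      also have "\<dots> \<le> \<rho> * ?q^\<Delta>"
      proof -
        have "card {g\<in>A'-{e}. u \<in> ends g} \<le> card {g\<in>A. u \<in> ends g}"
          using sub fin by (intro card_mono) auto
        also have "\<dots> \<le> \<Delta>" using deg by blast
        finally show ?thesis using \<rho> y B by (intro mult_left_mono power_increasing) auto
      qed
      finally show ?thesis using hB by linarith
    qed
    have dv: "card {g\<in>A'. v \<in> ends g} = Suc (card {g\<in>A'-{e}. v \<in> ends g})"
    proof -
      have "{g\<in>A'. v \<in> ends g} = insert e {g\<in>A'-{e}. v \<in> ends g}" using e by auto
      then show ?thesis using finA' by simp
    qed
    have split: "Rt ends A' v = Rt ends (A'-{e}) v \<union> {R\<in>Rt ends A' v. e \<in> R}"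
      by (auto simp: Rt_def)
    have "sum (wt ends y \<rho> v) (Rt ends A' v) = sum (wt ends y \<rho> v) (Rt ends (A'-{e}) v)
        + sum (wt ends y \<rho> v) {R\<in>Rt ends A' v. e \<in> R}"
      by (subst split, rule sum.union_disjoint) (auto simp: finite_Rt finA' Rt_def)
    also have "\<dots> \<le> \<rho> * ?q^card {g\<in>A'-{e}. v \<in> ends g}
        + y * (\<rho> * ?q^card {g\<in>A'-{e}. v \<in> ends g} * B)"
    proof (rule add_mono[OF IHv])
      have fe: "\<forall>g\<in>A'. finite (ends g)" using cE less.prems
        by (metis card.infinite subsetD zero_neq_numeral)
      have "sum (wt ends y \<rho> v) {R\<in>Rt ends A' v. e \<in> R}
          \<le> y * (sum (wt ends y \<rho> v) (Rt ends (A'-{e}) v) * sum (wt ends y \<rho> u) (Rt ends (A'-{e}) u))"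
        by (rule split_sum[OF finA' e(1) u(1) fe y \<rho>])
      also have "\<dots> \<le> y * (\<rho> * ?q^card {g\<in>A'-{e}. v \<in> ends g} * B)"
        using IHv IHu y \<rho> B
        by (intro mult_left_mono mult_mono) (auto intro!: sum_nonneg wt_nonneg)
      finally show "sum (wt ends y \<rho> v) {R\<in>Rt ends A' v. e \<in> R}
          \<le> y * (\<rho> * ?q^card {g\<in>A'-{e}. v \<in> ends g} * B)" .
    qed
    also have "\<dots> = \<rho> * ?q^card {g\<in>A'. v \<in> ends g}"
      by (simp add: dv algebra_simps)
    finally show ?thesis .
  qed
qed




lemma e_ge_8_3: "exp (1::real) \<ge> 8/3"
proof -
  have "1 + 1/3 + (1/3)^2/2 \<le> exp (1/3::real)" by (rule exp_lower_Taylor_quadratic) simp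
  then have a: "25/18 \<le> exp (1/3::real)" by (simp add: power2_eq_square)
  have "exp (1::real) = exp (1/3) ^ 3" using exp_of_nat_mult[of 3 "1/3::real"] by simp
  moreover have "(25/18::real)^3 \<le> exp (1/3) ^ 3" using a by (intro power_mono) auto
  moreover have "(8/3::real) \<le> (25/18)^3" by (simp add: power3_eq_cube)
  ultimately show ?thesis by linarith
qed

lemma exp_le_inv: "(c::real) < 1 \<Longrightarrow> exp c \<le> 1 / (1 - c)"
proof -
  assume c: "c < 1"
  have "1 - c \<le> exp (-c)" using exp_ge_add_one_self[of "-c"] by simp
  then have "(1 - c) * exp c \<le> 1" by (simp add: exp_minus field_simps)
  then show ?thesis using c by (simp add: field_simps)
qed

lemma expbound: assumes b: "0 < b" "b \<le> 1/3" shows "exp (2*b/exp 1) \<le> 1 + (b::real)"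
proof -
  have e: "exp (1::real) \<ge> 8/3" by (rule e_ge_8_3)
  define c where "c = 2*b/exp 1"
  have c0: "c \<ge> 0" using b by (simp add: c_def)
  have c1: "c < 1"
  proof -
    have "c \<le> 2*b/(8/3)" unfolding c_def using b e by (intro divide_left_mono) auto
    then show ?thesis using b by simp
  qed
  have "c * (1 + b) \<le> b"
  proof -
    have "2 * (1 + b) \<le> exp 1" using b e by simp
    then have "b * (2 * (1 + b)) \<le> b * exp 1" using b by (intro mult_left_mono) auto
    then have "2*b*(1+b) \<le> b * exp 1" by (simp add: mult_ac)
    then show ?thesis unfolding c_def by (simp add: field_simps)
  qed
  then have "1 / (1 - c) \<le> 1 + b" using c1 b by (simp add: field_simps)
  then show ?thesis using exp_le_inv[OF c1] unfolding c_def by linarith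
qed

lemma num_facts:
  fixes x r1 :: real and \<Delta> :: nat
  assumes D: "\<Delta> \<ge> 1" and r1: "r1 \<ge> 1" and x: "x \<ge> 0"
    and hx: "x * (real \<Delta> * exp 2 * r1 * (r1 + 1)) \<le> 1"
  defines "t \<equiv> 1 / real \<Delta>"
  defines "y \<equiv> x * exp (-t)" and "\<rho> \<equiv> r1 * exp 1" and "M \<equiv> (2*r1+2)/(2*r1+1)"
  defines "B \<equiv> \<rho> * M"
  shows "\<rho> * (1 + y*B)^\<Delta> \<le> B" and "exp (-t) * (y * B * B) \<le> 1 - exp (-t)"
proof -
  define a where "a = x * r1 * exp 1"
  have Dp: "real \<Delta> > 0" using D by simp
  have a0: "a \<ge> 0" using x r1 by (simp add: a_def)
  have ha: "a * (real \<Delta> * exp 1 * (r1 + 1)) \<le> 1"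
  proof -
    have "exp (2::real) = exp 1 * exp 1" by (simp add: exp_add[symmetric])
    then show ?thesis using hx by (simp add: a_def mult_ac)
  qed
  have M0: "M > 0" using r1 by (simp add: M_def)
  have yB: "y * B \<le> a * M"
  proof -
    have "exp (-t) \<le> 1" using Dp by (simp add: t_def)
    then have "y \<le> x" using x by (simp add: y_def mult_left_le)
    then have "y * B \<le> x * B" using M0 r1 by (intro mult_right_mono) (auto simp: B_def \<rho>_def)
    then show ?thesis by (simp add: B_def \<rho>_def a_def mult_ac)
  qed
  have y0: "y \<ge> 0" using x by (simp add: y_def)
  have B0: "B \<ge> 0" using M0 r1 by (simp add: B_def \<rho>_def)
  have aD: "a * M * real \<Delta> \<le> M / (exp 1 * (r1 + 1))"
  proof -
    have pos: "exp 1 * (r1 + 1) > 0" using r1 by simp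
    have "a * real \<Delta> * (exp 1 * (r1 + 1)) \<le> 1" using ha by (simp add: mult_ac)
    then have "a * real \<Delta> \<le> 1 / (exp 1 * (r1 + 1))" using pos by (simp add: field_simps)
    then have "a * real \<Delta> * M \<le> 1 / (exp 1 * (r1 + 1)) * M" using M0 by (intro mult_right_mono) auto
    then show ?thesis by (simp add: mult_ac)
  qed
  have MM: "M / (exp 1 * (r1 + 1)) = 2 * (1/(2*r1+1)) / exp 1"
  proof -
    have m: "2*r1+2 = 2*(r1+1)" by simp
    have "M / (exp 1 * (r1 + 1)) = (2*(r1+1)) / (((2*r1+1) * exp 1) * (r1+1))"
      unfolding M_def m by (simp add: divide_divide_eq_left mult_ac)
    also have "\<dots> = 2 / ((2*r1+1) * exp 1)" using r1 by (intro mult_divide_mult_cancel_right) auto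
    also have "\<dots> = 2 * (1/(2*r1+1)) / exp 1" by simp
    finally show ?thesis .
  qed
  have expM: "exp (M / (exp 1 * (r1 + 1))) \<le> M"
  proof -
    have "exp (2 * (1/(2*r1+1)) / exp 1) \<le> 1 + 1/(2*r1+1)"
      using r1 by (intro expbound) (auto simp: field_simps)
    also have "1 + 1/(2*r1+1) = M" using r1 by (simp add: M_def field_simps)
    finally show ?thesis using MM by simp
  qed
  have "(1 + y*B)^\<Delta> \<le> exp (y*B) ^ \<Delta>"
    using y0 B0 by (intro power_mono) (auto simp: add_nonneg_nonneg)
  also have "\<dots> = exp (real \<Delta> * (y*B))" by (simp add: exp_of_nat_mult)
  also have "\<dots> \<le> exp (M / (exp 1 * (r1 + 1)))"
  proof -
    have "real \<Delta> * (y*B) \<le> real \<Delta> * (a*M)" using yB Dp by simp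
    then show ?thesis using aD by (simp add: mult_ac)
  qed
  also have "\<dots> \<le> M" by (rule expM)
  finally have "(1 + y*B)^\<Delta> \<le> M" .
  then show "\<rho> * (1 + y*B)^\<Delta> \<le> B" using r1 unfolding B_def \<rho>_def
    by (intro mult_left_mono) auto
  have rM: "r1 * M * M \<le> r1 + 1"
  proof -
    have "r1 * (2*r1+2)*(2*r1+2) \<le> (r1+1) * (2*r1+1)*(2*r1+1)" using r1 by (simp add: algebra_simps)
    moreover have "r1 * M * M = r1 * (2*r1+2)*(2*r1+2) / ((2*r1+1)*(2*r1+1))"
      by (simp add: M_def)
    moreover have "(2*r1+1)*(2*r1+1) > 0" using r1 by simp
    ultimately show ?thesis by (simp add: pos_divide_le_eq mult_ac)
  qed
  have "y * B * B \<le> a * M * B" using yB B0 by (intro mult_right_mono) auto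
  also have "\<dots> = a * (exp 1 * (r1 + 1)) * (r1 * M * M / (r1 + 1))"
    using r1 by (simp add: B_def \<rho>_def field_simps)
  also have "\<dots> \<le> t * 1"
  proof (rule mult_mono)
    have "a * (real \<Delta> * exp 1 * (r1 + 1)) \<le> 1" by (rule ha)
    then show "a * (exp 1 * (r1 + 1)) \<le> t" using Dp by (simp add: t_def field_simps)
    show "r1 * M * M / (r1 + 1) \<le> 1" using rM r1 by simp
    show "0 \<le> t" using Dp by (simp add: t_def)
    show "0 \<le> r1 * M * M / (r1 + 1)" using r1 M0 by simp
  qed
  finally have yBB: "y * B * B \<le> t" by simp
  have "exp (-t) * (y * B * B) \<le> exp (-t) * t" using yBB by (intro mult_left_mono) auto
  also have "\<dots> \<le> 1 - exp (-t)"
  proof -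
    have "1 + t \<le> exp t" by simp
    then have "exp (-t) * (1 + t) \<le> exp (-t) * exp t" by (intro mult_left_mono) auto
    then show ?thesis by (simp add: exp_minus field_simps)
  qed
  finally show "exp (-t) * (y * B * B) \<le> 1 - exp (-t)" .
qed




locale hol =
  fixes V :: "'v set" and E :: "('e::linorder) set" and ends :: "'e \<Rightarrow> 'v set"
    and \<pi> :: "'v \<Rightarrow> sig" and r1 :: real and \<Delta> :: nat
  assumes graph: "is_graph V E ends"
    and f0: "\<forall>v\<in>V. sig_fun (\<pi> v) (replicate (card (edges_at E ends v)) False) = 1"
    and fr: "\<forall>v\<in>V. \<forall>xs. length xs = card (edges_at E ends v)
                \<and> xs \<noteq> replicate (card (edges_at E ends v)) False \<longrightarrow> cmod (sig_fun (\<pi> v) xs) \<le> r1"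
    and r1: "r1 \<ge> 1"
    and deg: "\<forall>p. card {g\<in>E. p \<in> ends g} \<le> \<Delta>"
begin

definition sl where "sl v = sorted_list_of_set (edges_at E ends v)"
definition W where "W S w = (\<Prod>v\<in>V. sig_fun (\<pi> v) (map (\<lambda>g. g \<in> S) (sl v))) * w ^ card S"
definition ZA where "ZA A w = (\<Sum>S\<in>Pow A. W S w)"
definition inc where "inc C = {g. \<exists>p\<in>ends g. touch C ends p}"

lemma finE: "finite E" using graph by (simp add: is_graph_def)
lemma endsE: "g \<in> E \<Longrightarrow> ends g \<subseteq> V \<and> card (ends g) = 2" using graph by (simp add: is_graph_def)

lemma set_sl: "set (sl v) = edges_at E ends v"
  unfolding sl_def using finE by (simp add: edges_at_def)
lemma length_sl: "length (sl v) = card (edges_at E ends v)"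
  unfolding sl_def by simp

lemma map_notouch: "\<not> touch S ends v \<Longrightarrow>
    map (\<lambda>g. g \<in> S) (sl v) = replicate (card (edges_at E ends v)) False"
proof -
  assume nt: "\<not> touch S ends v"
  have "map (\<lambda>g. g \<in> S) (sl v) = map (\<lambda>_. False) (sl v)"
    using nt set_sl by (intro map_cong) (auto simp: touch_def edges_at_def)
  then show ?thesis by (simp add: map_replicate_const length_sl)
qed

lemma map_touch: "touch S ends v \<Longrightarrow> S \<subseteq> E \<Longrightarrow>
    map (\<lambda>g. g \<in> S) (sl v) \<noteq> replicate (card (edges_at E ends v)) False"
proof -
  assume t: "touch S ends v" and S: "S \<subseteq> E"
  then obtain g where g: "g \<in> S" "v \<in> ends g" by (auto simp: touch_def)
  then have "g \<in> set (sl v)" using S set_sl by (auto simp: edges_at_def)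
  then have "True \<in> set (map (\<lambda>g. g \<in> S) (sl v))" using g by force
  then show ?thesis by (metis in_set_replicate)
qed

lemma f_notouch: "v \<in> V \<Longrightarrow> \<not> touch S ends v \<Longrightarrow> sig_fun (\<pi> v) (map (\<lambda>g. g \<in> S) (sl v)) = 1"
  using map_notouch f0 by simp

lemma W_empty: "W {} w = 1"
proof -
  have "\<forall>v\<in>V. sig_fun (\<pi> v) (map (\<lambda>g. g \<in> {}) (sl v)) = 1"
    using f_notouch[of _ "{}"] by (simp add: touch_def)
  then show ?thesis unfolding W_def by simp
qed

lemma ZA_empty: "ZA {} w = 1"
  unfolding ZA_def by (simp add: W_empty)

lemma W_factor:
  assumes "S1 \<inter> S2 = {}" "finite S1" "finite S2" "\<And>v. \<not> (touch S1 ends v \<and> touch S2 ends v)"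
  shows "W (S1 \<union> S2) w = W S1 w * W S2 w"
proof -
  have pv: "sig_fun (\<pi> v) (map (\<lambda>g. g \<in> S1 \<union> S2) (sl v))
      = sig_fun (\<pi> v) (map (\<lambda>g. g \<in> S1) (sl v)) * sig_fun (\<pi> v) (map (\<lambda>g. g \<in> S2) (sl v))"
    if v: "v \<in> V" for v
  proof (cases "touch S2 ends v")
    case True
    then have n1: "\<not> touch S1 ends v" using assms(4) by blast
    have e: "map (\<lambda>g. g \<in> S1 \<union> S2) (sl v) = map (\<lambda>g. g \<in> S2) (sl v)"
      using n1 set_sl by (intro map_cong) (auto simp: touch_def edges_at_def)
    show ?thesis by (simp only: e f_notouch[OF v n1] mult_1_left)
  next
    case False
    have e: "map (\<lambda>g. g \<in> S1 \<union> S2) (sl v) = map (\<lambda>g. g \<in> S1) (sl v)"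
      using False set_sl by (intro map_cong) (auto simp: touch_def edges_at_def)
    show ?thesis by (simp only: e f_notouch[OF v False] mult_1_right)
  qed
  have c: "card (S1 \<union> S2) = card S1 + card S2" using assms by (simp add: card_Un_disjoint)
  show ?thesis unfolding W_def using pv by (simp add: prod.distrib c power_add mult_ac)
qed

lemma W_bound:
  assumes C: "C \<subseteq> E"
  shows "cmod (W C w) \<le> cmod w ^ card C * r1 ^ card (verts ends C)"
proof -
  have "cmod (\<Prod>v\<in>V. sig_fun (\<pi> v) (map (\<lambda>g. g \<in> C) (sl v)))
      = (\<Prod>v\<in>V. cmod (sig_fun (\<pi> v) (map (\<lambda>g. g \<in> C) (sl v))))" by (simp add: prod_norm)
  also have "\<dots> \<le> (\<Prod>v\<in>V. if v \<in> verts ends C then r1 else 1)"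
  proof (rule prod_mono, safe)
    fix v assume v: "v \<in> V"
    show "0 \<le> cmod (sig_fun (\<pi> v) (map (\<lambda>g. g \<in> C) (sl v)))" by simp
    show "cmod (sig_fun (\<pi> v) (map (\<lambda>g. g \<in> C) (sl v))) \<le> (if v \<in> verts ends C then r1 else 1)"
    proof (cases "touch C ends v")
      case True
      then have "v \<in> verts ends C" by (auto simp: touch_def verts_def)
      moreover have "cmod (sig_fun (\<pi> v) (map (\<lambda>g. g \<in> C) (sl v))) \<le> r1"
        using fr v map_touch[OF True C] by (simp add: length_sl)
      ultimately show ?thesis by simp
    next
      case False
      then show ?thesis using f_notouch[OF v False] r1 by auto
    qed
  qed
  also have "\<dots> = r1 ^ card (V \<inter> verts ends C)"
    using graph by (simp add: prod.If_cases is_graph_def Int_def)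
  also have "V \<inter> verts ends C = verts ends C" using C endsE by (auto simp: verts_def)
  finally have "cmod (\<Prod>v\<in>V. sig_fun (\<pi> v) (map (\<lambda>g. g \<in> C) (sl v))) \<le> r1 ^ card (verts ends C)" .
  then show ?thesis unfolding W_def
    by (simp add: norm_mult norm_power mult.commute mult_left_mono)
qed


lemma C_sub_inc: "C \<subseteq> E \<Longrightarrow> C \<subseteq> inc C"
proof
  fix g assume "C \<subseteq> E" "g \<in> C"
  then have "card (ends g) = 2" using endsE by blast
  then obtain p where "p \<in> ends g" by (metis card.empty ex_in_conv zero_neq_numeral)
  then show "g \<in> inc C" using \<open>g \<in> C\<close> by (auto simp: inc_def touch_def)
qed

lemma comp_union:
  assumes C: "rooted ends C u" "e \<in> C" "u \<in> ends e" and S': "S' \<inter> inc C = {}"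
  shows "ecomp ends (C \<union> S') u = C"
proof
  show "C \<subseteq> ecomp ends (C \<union> S') u"
  proof
    fix g assume g: "g \<in> C"
    then obtain p where "p \<in> ends g" "vreach C ends u p" using C(1) by (auto simp: rooted_def)
    then show "g \<in> ecomp ends (C \<union> S') u" using g vreach_mono[of C ends u p "C \<union> S'"]
      by (auto simp: ecomp_def)
  qed
  have inv: "vreach (C \<union> S') ends u q \<Longrightarrow> touch C ends q" for q
  proof (induction rule: rtranclp_induct)
    case base then show ?case using C by (auto simp: touch_def)
  next
    case (step q r)
    then obtain g where g: "g \<in> C \<union> S'" "q \<in> ends g" "r \<in> ends g" by (auto simp: vadj_def)
    show ?case
    proof (cases "g \<in> C")
      case True then show ?thesis using g by (auto simp: touch_def)
    next
      case False
      then have "g \<in> S'" using g by auto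
      moreover have "g \<in> inc C" using step.IH g by (auto simp: inc_def)
      ultimately show ?thesis using S' by auto
    qed
  qed
  show "ecomp ends (C \<union> S') u \<subseteq> C"
  proof
    fix g assume g: "g \<in> ecomp ends (C \<union> S') u"
    then obtain p where p: "p \<in> ends g" "vreach (C \<union> S') ends u p" "g \<in> C \<union> S'" by (auto simp: ecomp_def)
    then have "g \<in> inc C" using inv by (auto simp: inc_def)
    then show "g \<in> C" using p(3) S' by auto
  qed
qed

lemma ZA_rec:
  assumes A: "A \<subseteq> E" "e \<in> A" "u \<in> ends e"
  shows "ZA A w = ZA (A - {e}) w + (\<Sum>C\<in>{C\<in>Rt ends A u. e \<in> C}. W C w * ZA (A - inc C) w)"
proof -
  have finA: "finite A" using A finE finite_subset by blast
  have "ZA A w = (\<Sum>S\<in>{S\<in>Pow A. e \<notin> S}. W S w) + (\<Sum>S\<in>{S\<in>Pow A. e \<in> S}. W S w)"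
    unfolding ZA_def using finA by (subst sum.union_disjoint[symmetric]) (auto intro: sum.cong)
  also have "{S\<in>Pow A. e \<notin> S} = Pow (A - {e})" by auto
  also have "(\<Sum>S\<in>{S\<in>Pow A. e \<in> S}. W S w) = (\<Sum>C\<in>{C\<in>Rt ends A u. e \<in> C}. W C w * ZA (A - inc C) w)"
  proof -
    let ?Cs = "{C\<in>Rt ends A u. e \<in> C}"
    let ?Sig = "SIGMA C:?Cs. Pow (A - inc C)"
    have bij: "bij_betw (\<lambda>(C,S'). C \<union> S') ?Sig {S\<in>Pow A. e \<in> S}"
    proof (rule bij_betw_imageI)
      show "inj_on (\<lambda>(C,S'). C \<union> S') ?Sig"
      proof (rule inj_onI)
        fix p1 p2 assume p1: "p1 \<in> ?Sig" and p2: "p2 \<in> ?Sig"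
          and eq: "(\<lambda>(C,S'). C \<union> S') p1 = (\<lambda>(C,S'). C \<union> S') p2"
        obtain C1 S1 where e1: "p1 = (C1, S1)" by fastforce
        obtain C2 S2 where e2: "p2 = (C2, S2)" by fastforce
        have a: "C1 \<in> ?Cs" "S1 \<subseteq> A - inc C1" "C2 \<in> ?Cs" "S2 \<subseteq> A - inc C2" "C1 \<union> S1 = C2 \<union> S2"
          using p1 p2 eq unfolding e1 e2 by auto
        have r1: "rooted ends C1 u" "rooted ends C2 u" using a by (auto simp: Rt_def)
        have "C1 = ecomp ends (C1 \<union> S1) u" using comp_union[OF r1(1) _ A(3), of S1] a by auto
        also have "\<dots> = ecomp ends (C2 \<union> S2) u" using a(5) by simp
        also have "\<dots> = C2" using comp_union[OF r1(2) _ A(3), of S2] a by auto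
        finally have c: "C1 = C2" .
        have "C1 \<subseteq> E" "C2 \<subseteq> E" using a A(1) by (auto simp: Rt_def)
        then have "C1 \<subseteq> inc C1" "C2 \<subseteq> inc C2" using C_sub_inc by auto
        then have s1: "S1 = (C1 \<union> S1) - C1" and s2: "S2 = (C2 \<union> S2) - C2" using a(2,4) by auto
        have "S1 = S2" using s1 s2 a(5) c by blast
        then show "p1 = p2" by (simp add: e1 e2 c)
      qed
      show "(\<lambda>(C,S'). C \<union> S') ` ?Sig = {S\<in>Pow A. e \<in> S}"
      proof
        show "(\<lambda>(C,S'). C \<union> S') ` ?Sig \<subseteq> {S\<in>Pow A. e \<in> S}"
        proof
          fix S assume "S \<in> (\<lambda>(C,S'). C \<union> S') ` ?Sig"
          then obtain C S' where cs: "C \<in> ?Cs" "S' \<subseteq> A - inc C" "S = C \<union> S'" by blast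
          then show "S \<in> {S\<in>Pow A. e \<in> S}" by (auto simp: Rt_def)
        qed
        show "{S\<in>Pow A. e \<in> S} \<subseteq> (\<lambda>(C,S'). C \<union> S') ` ?Sig"
        proof
          fix S assume S: "S \<in> {S\<in>Pow A. e \<in> S}"
          define C where "C = ecomp ends S u"
          have CS: "C \<subseteq> S" unfolding C_def by (rule comp_sub)
          have eC: "e \<in> C" using S A(3) by (auto simp: C_def ecomp_def)
          have CR: "C \<in> ?Cs" using CS S eC comp_rooted[of ends S u] by (auto simp: Rt_def C_def)
          have "S - C \<subseteq> A - inc C"
          proof
            fix g assume g: "g \<in> S - C"
            have "g \<notin> inc C"
            proof
              assume "g \<in> inc C"
              then obtain p h where ph: "p \<in> ends g" "h \<in> C" "p \<in> ends h" by (auto simp: inc_def touch_def)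
              then obtain q where q: "q \<in> ends h" "vreach S ends u q" by (auto simp: C_def ecomp_def)
              have "vadj S ends q p" using ph q CS by (auto simp: vadj_def)
              then have "vreach S ends u p" using q(2) by (meson rtranclp.rtrancl_into_rtrancl)
              then show False using g ph(1) by (auto simp: C_def ecomp_def)
            qed
            then show "g \<in> A - inc C" using g S by auto
          qed
          then have "(C, S - C) \<in> ?Sig" using CR by auto
          moreover have "S = C \<union> (S - C)" using CS by auto
          ultimately show "S \<in> (\<lambda>(C,S'). C \<union> S') ` ?Sig"
            by (intro image_eqI[of _ _ "(C, S - C)"]) simp_all
        qed
      qed
    qed
    have "(\<Sum>S\<in>{S\<in>Pow A. e \<in> S}. W S w) = (\<Sum>p\<in>?Sig. W ((\<lambda>(C,S'). C \<union> S') p) w)"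
      using sum.reindex_bij_betw[OF bij, of "\<lambda>S. W S w"] by simp
    also have "\<dots> = (\<Sum>p\<in>?Sig. W (fst p) w * W (snd p) w)"
    proof (rule sum.cong[OF refl])
      fix p assume p: "p \<in> ?Sig"
      obtain C S' where pe: "p = (C, S')" by fastforce
      have CA: "C \<subseteq> A" "S' \<subseteq> A - inc C" using p pe by (auto simp: Rt_def)
      have "W (C \<union> S') w = W C w * W S' w"
      proof (rule W_factor)
        show "C \<inter> S' = {}" using CA C_sub_inc[of C] A(1) by auto
        show "finite C" using CA(1) finA by (rule finite_subset)
        show "finite S'" using CA(2) finA by (meson Diff_subset finite_subset subset_trans)
        show "\<not> (touch C ends v \<and> touch S' ends v)" for v
          using CA by (auto simp: touch_def inc_def)
      qed
      then show "W ((\<lambda>(C,S'). C \<union> S') p) w = W (fst p) w * W (snd p) w" using pe by simp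
    qed
    also have "\<dots> = (\<Sum>C\<in>?Cs. \<Sum>S'\<in>Pow (A - inc C). W C w * W S' w)"
      using finA by (subst sum.Sigma) (auto simp: finite_Rt case_prod_unfold)
    also have "\<dots> = (\<Sum>C\<in>?Cs. W C w * ZA (A - inc C) w)"
      by (simp add: ZA_def sum_distrib_left)
    finally show ?thesis .
  qed
  finally show ?thesis by (simp add: ZA_def)
qed

end



context hol begin

lemma card_filter_sum: "finite I \<Longrightarrow> card {g\<in>I. P g} = (\<Sum>g\<in>I. if P g then 1 else (0::nat))"
  by (simp add: sum.inter_filter[symmetric])

lemma count_inc:
  assumes CA: "C \<subseteq> A" and AE: "A \<subseteq> E"
  shows "card (A \<inter> inc C) + card C \<le> \<Delta> * card (verts ends C)"
proof -
  define I where "I = A \<inter> inc C"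
  define X where "X = verts ends C"
  have finI: "finite I" using AE finE unfolding I_def by (meson finite_subset inf_le1 subset_trans)
  have finC: "finite C" using CA AE finE by (meson finite_subset subset_trans)
  have finX: "finite X"
  proof -
    have "X \<subseteq> V" using CA AE endsE unfolding X_def verts_def by blast
    moreover have "finite V" using graph by (simp add: is_graph_def)
    ultimately show ?thesis by (rule finite_subset)
  qed
  have CI: "C \<subseteq> I" using CA AE C_sub_inc[of C] unfolding I_def by auto
  have "card I + card C = (\<Sum>g\<in>I. if g \<in> C then 2 else 1)"
  proof -
    have "(\<Sum>g\<in>I. if g \<in> C then 2 else 1) = (\<Sum>g\<in>I. 1 + (if g \<in> C then 1 else (0::nat)))"
      by (intro sum.cong) auto
    also have "\<dots> = card I + card {g\<in>I. g \<in> C}"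
      unfolding sum.distrib card_filter_sum[OF finI] by simp
    also have "{g\<in>I. g \<in> C} = C" using CI by auto
    finally show ?thesis by simp
  qed
  also have "\<dots> \<le> (\<Sum>g\<in>I. card {p\<in>X. p \<in> ends g})"
  proof (rule sum_mono)
    fix g assume g: "g \<in> I"
    show "(if g \<in> C then 2 else 1) \<le> card {p\<in>X. p \<in> ends g}"
    proof (cases "g \<in> C")
      case True
      then have "{p\<in>X. p \<in> ends g} = ends g" unfolding X_def verts_def by auto
      moreover have "card (ends g) = 2" using True CA AE endsE by blast
      ultimately show ?thesis using True by simp
    next
      case False
      obtain p where p: "p \<in> ends g" "touch C ends p" using g by (auto simp: I_def inc_def)
      then have "p \<in> {p\<in>X. p \<in> ends g}" by (auto simp: X_def verts_def touch_def)
      moreover have "finite {p\<in>X. p \<in> ends g}" using finX by simp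
      ultimately have "card {p\<in>X. p \<in> ends g} \<ge> 1"
        by (metis One_nat_def Suc_leI card_gt_0_iff empty_iff)
      then show ?thesis using False by simp
    qed
  qed
  also have "\<dots> = (\<Sum>p\<in>X. card {g\<in>I. p \<in> ends g})"
  proof -
    have "(\<Sum>g\<in>I. card {p\<in>X. p \<in> ends g}) = (\<Sum>g\<in>I. \<Sum>p\<in>X. if p \<in> ends g then 1 else (0::nat))"
      using finX by (simp add: card_filter_sum)
    also have "\<dots> = (\<Sum>p\<in>X. \<Sum>g\<in>I. if p \<in> ends g then 1 else (0::nat))"
      by (rule sum.swap)
    also have "\<dots> = (\<Sum>p\<in>X. card {g\<in>I. p \<in> ends g})"
      using finI by (simp add: card_filter_sum)
    finally show ?thesis .
  qed
  also have "\<dots> \<le> (\<Sum>p\<in>X. \<Delta>)"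
  proof (rule sum_mono)
    fix p
    have "card {g\<in>I. p \<in> ends g} \<le> card {g\<in>E. p \<in> ends g}"
      using finE AE by (intro card_mono) (auto simp: I_def)
    then show "card {g\<in>I. p \<in> ends g} \<le> \<Delta>" using deg le_trans by blast
  qed
  also have "\<dots> = \<Delta> * card X" by simp
  finally show ?thesis unfolding I_def X_def .
qed


lemma main_ratio:
  assumes D: "\<Delta> \<ge> 1" and hx: "cmod w * (real \<Delta> * exp 2 * r1 * (r1 + 1)) \<le> 1"
  shows "A \<subseteq> E \<Longrightarrow> ZA A w \<noteq> 0 \<and>
     (\<forall>e\<in>A. cmod (ZA (A - {e}) w) \<le> exp (1 / real \<Delta>) * cmod (ZA A w))"
proof (induction "card A" arbitrary: A rule: less_induct)
  case less
  define x where "x = cmod w"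
  define t where "t = 1 / real \<Delta>"
  define y where "y = x * exp (-t)"
  define \<rho> where "\<rho> = r1 * exp 1"
  define M where "M = (2*r1+2)/(2*r1+1)"
  define B where "B = \<rho> * M"
  have x0: "x \<ge> 0" by (simp add: x_def)
  have N1: "\<rho> * (1 + y*B)^\<Delta> \<le> B" and N2: "exp (-t) * (y * B * B) \<le> 1 - exp (-t)"
    using num_facts[OF D r1 x0 hx[folded x_def]] unfolding t_def y_def \<rho>_def M_def B_def by auto
  have Dp: "real \<Delta> > 0" using D by simp
  have y0: "y \<ge> 0" using x0 by (simp add: y_def)
  have \<rho>1: "\<rho> \<ge> 1"
  proof -
    have "(1::real) * 1 \<le> r1 * exp 1" using r1 by (intro mult_mono) auto
    then show ?thesis by (simp add: \<rho>_def)
  qed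
  have B0: "B \<ge> 0" using r1 by (simp add: B_def \<rho>_def M_def)
  have finA: "finite A" using less.prems finE by (rule finite_subset)
  have IH: "ZA A' w \<noteq> 0 \<and> (\<forall>e\<in>A'. cmod (ZA (A' - {e}) w) \<le> exp t * cmod (ZA A' w))"
    if "card A' < card A" "A' \<subseteq> E" for A'
    using less.hyps that unfolding t_def by blast
  have tele: "cmod (ZA (A'' - D') w) \<le> exp t ^ card D' * cmod (ZA A'' w)"
    if A'': "A'' \<subseteq> E" "card A'' < card A" and D': "D' \<subseteq> A''" for A'' D'
  proof -
    have "finite D'" using D' A''(1) finE by (meson finite_subset subset_trans)
    then show ?thesis using D'
    proof (induction D' rule: finite_induct)
      case empty then show ?case by simp
    next
      case (insert d D')
      have fA'': "finite A''" using A''(1) finE by (rule finite_subset)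
      have "card (A'' - D') \<le> card A''" using fA'' by (intro card_mono) auto
      then have c: "card (A'' - D') < card A" using A''(2) by linarith
      have "A'' - insert d D' = (A'' - D') - {d}" by blast
      then have "cmod (ZA (A'' - insert d D') w) = cmod (ZA ((A'' - D') - {d}) w)" by (simp only:)
      also have "\<dots> \<le> exp t * cmod (ZA (A'' - D') w)"
      proof -
        have "A'' - D' \<subseteq> E" using A''(1) by blast
        moreover have "d \<in> A'' - D'" using insert.hyps(2) insert.prems by blast
        ultimately show ?thesis using IH[OF c] by blast
      qed
      also have "\<dots> \<le> exp t * (exp t ^ card D' * cmod (ZA A'' w))"
      proof (rule mult_left_mono)
        have "D' \<subseteq> A''" using insert.prems by blast
        then show "cmod (ZA (A'' - D') w) \<le> exp t ^ card D' * cmod (ZA A'' w)" by (rule insert.IH)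
      qed simp
      also have "exp t * (exp t ^ card D' * cmod (ZA A'' w)) = exp t ^ Suc (card D') * cmod (ZA A'' w)"
        by simp
      also have "Suc (card D') = card (insert d D')" using insert.hyps by simp
      finally show ?case .
    qed
  qed
  have Hb: "sum (wt ends y \<rho> v) (Rt ends A' v) \<le> B" if "A' \<subseteq> E" for A' v
  proof -
    have "sum (wt ends y \<rho> v) (Rt ends A' v) \<le> \<rho> * (1+y*B)^card {g\<in>A'. v \<in> ends g}"
      by (rule H_bound[OF finE _ deg y0 \<rho>1 B0 N1 that]) (use endsE in blast)
    also have "\<dots> \<le> \<rho> * (1+y*B)^\<Delta>"
    proof -
      have "card {g\<in>A'. v \<in> ends g} \<le> card {g\<in>E. v \<in> ends g}"
        using that finE by (intro card_mono) auto
      then have "card {g\<in>A'. v \<in> ends g} \<le> \<Delta>" using deg le_trans by blast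
      then show ?thesis using \<rho>1 y0 B0 by (intro mult_left_mono power_increasing) auto
    qed
    finally show ?thesis using N1 by linarith
  qed
  have step: "ZA (A - {e}) w \<noteq> 0 \<and> cmod (ZA (A - {e}) w) \<le> exp t * cmod (ZA A w)" if e: "e \<in> A" for e
  proof -
    have cAe: "card (A - {e}) < card A" using e finA by (meson card_Diff1_less)
    have AeE: "A - {e} \<subseteq> E" using less.prems by auto
    have nz: "ZA (A - {e}) w \<noteq> 0" using IH[OF cAe AeE] by blast
    have ce: "card (ends e) = 2" using endsE[of e] e less.prems by blast
    then have "ends e \<noteq> {}" by auto
    then obtain u where u: "u \<in> ends e" by blast
    obtain u' where u': "ends e = {u,u'}" "u' \<noteq> u" using card2_other[OF ce u] by blast
    let ?Cs = "{C\<in>Rt ends A u. e \<in> C}"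
    let ?S = "\<Sum>C\<in>?Cs. W C w * ZA (A - inc C) w"
    have rec: "ZA A w = ZA (A - {e}) w + ?S" by (rule ZA_rec[OF less.prems e u])
    have trm: "cmod (W C w * ZA (A - inc C) w) \<le> exp (-t) * wt ends y \<rho> u C * cmod (ZA (A - {e}) w)"
      if C: "C \<in> ?Cs" for C
    proof -
      have CA: "C \<subseteq> A" "e \<in> C" using C by (auto simp: Rt_def)
      have CE: "C \<subseteq> E" using CA less.prems by auto
      define D' where "D' = (A \<inter> inc C) - {e}"
      have eI: "e \<in> A \<inter> inc C" using CA C_sub_inc[OF CE] e by auto
      have AD: "A - inc C = (A - {e}) - D'" using eI by (auto simp: D'_def)
      have finI: "finite (A \<inter> inc C)" using finA by simp
      have c1: "card (A \<inter> inc C) \<noteq> 0" using eI finI by auto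
      have cD: "card D' + 1 = card (A \<inter> inc C)" using card_Diff_singleton[OF eI] c1
        unfolding D'_def by linarith
      have cnt: "card (A \<inter> inc C) + card C \<le> \<Delta> * card (verts ends C)"
        by (rule count_inc[OF CA(1) less.prems])
      define k where "k = card (verts ends C)"
      define c where "c = card C"
      have uv: "verts ends C \<union> {u} = verts ends C" using CA u by (auto simp: verts_def)
      have Zb: "cmod (ZA (A - inc C) w) \<le> exp t ^ card D' * cmod (ZA (A - {e}) w)"
        unfolding AD by (rule tele[OF AeE cAe]) (auto simp: D'_def)
      have Wb: "cmod (W C w) \<le> x ^ c * r1 ^ k" using W_bound[OF CE] by (simp add: x_def c_def k_def)
      have expo: "real (card D') * t \<le> real k - t - t * real c"
      proof -
        have "card D' + 1 + c \<le> \<Delta> * k" using cnt cD unfolding k_def c_def by linarith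
        then have "real (card D' + 1 + c) \<le> real (\<Delta> * k)" by (rule of_nat_mono)
        then have "real (card D') + 1 + real c \<le> real \<Delta> * real k" by simp
        then have "(real (card D') + 1 + real c) * t \<le> real \<Delta> * real k * t"
          using Dp by (intro mult_right_mono) (auto simp: t_def)
        then show ?thesis using Dp by (simp add: t_def algebra_simps)
      qed
      have "cmod (W C w * ZA (A - inc C) w) \<le> x ^ c * r1 ^ k * (exp t ^ card D' * cmod (ZA (A - {e}) w))"
        unfolding norm_mult using Wb Zb x0 r1 by (intro mult_mono) auto
      also have "\<dots> = x ^ c * r1 ^ k * exp (real (card D') * t) * cmod (ZA (A - {e}) w)"
        by (simp add: exp_of_nat_mult)
      also have "\<dots> \<le> x ^ c * r1 ^ k * exp (real k - t - t * real c) * cmod (ZA (A - {e}) w)"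
        using expo x0 r1 by (intro mult_right_mono mult_left_mono) auto
      also have "\<dots> = exp (-t) * wt ends y \<rho> u C * cmod (ZA (A - {e}) w)"
      proof -
        have e1: "exp (-t) ^ c = exp (real c * (-t))" by (rule exp_of_nat_mult[symmetric])
        have e2: "exp 1 ^ k = exp (real k * 1)" by (rule exp_of_nat_mult[symmetric])
        have "exp (-t) * exp (-t) ^ c * exp 1 ^ k = exp (-t + real c * (-t) + real k * 1)"
          unfolding e1 e2 exp_add by simp
        also have "-t + real c * (-t) + real k * 1 = real k - t - t * real c" by (simp add: algebra_simps)
        finally have "exp (real k - t - t * real c) = exp (-t) * exp (-t) ^ c * exp 1 ^ k" by simp
        then show ?thesis unfolding wt_def uv
          by (simp add: y_def \<rho>_def power_mult_distrib k_def c_def mult_ac)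
      qed
      finally show ?thesis .
    qed
    have "cmod ?S \<le> (\<Sum>C\<in>?Cs. cmod (W C w * ZA (A - inc C) w))" by (rule norm_sum)
    also have "\<dots> \<le> (\<Sum>C\<in>?Cs. exp (-t) * wt ends y \<rho> u C * cmod (ZA (A - {e}) w))"
      by (rule sum_mono) (rule trm)
    also have "\<dots> = exp (-t) * cmod (ZA (A - {e}) w) * sum (wt ends y \<rho> u) ?Cs"
      by (simp add: sum_distrib_left sum_distrib_right mult_ac)
    also have "\<dots> \<le> exp (-t) * cmod (ZA (A - {e}) w) * (y * B * B)"
    proof (rule mult_left_mono)
      have fe: "\<forall>g\<in>A. finite (ends g)" using endsE less.prems
        by (metis card.infinite subsetD zero_neq_numeral)
      have "sum (wt ends y \<rho> u) ?Cs \<le> y * (sum (wt ends y \<rho> u) (Rt ends (A-{e}) u) * sum (wt ends y \<rho> u') (Rt ends (A-{e}) u'))"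
        by (rule split_sum[OF finA e u'(1) fe y0]) (use \<rho>1 in auto)
      also have "\<dots> \<le> y * (B * B)"
        using Hb[OF AeE] y0 B0 \<rho>1 by (intro mult_left_mono mult_mono) (auto intro!: sum_nonneg wt_nonneg)
      finally show "sum (wt ends y \<rho> u) ?Cs \<le> y * B * B" by (simp add: mult_ac)
    qed simp
    also have "\<dots> \<le> (1 - exp (-t)) * cmod (ZA (A - {e}) w)"
    proof -
      have "exp (-t) * (y * B * B) * cmod (ZA (A - {e}) w) \<le> (1 - exp (-t)) * cmod (ZA (A - {e}) w)"
        using N2 by (rule mult_right_mono) simp
      then show ?thesis by (simp add: mult_ac)
    qed
    finally have Sb: "cmod ?S \<le> (1 - exp (-t)) * cmod (ZA (A - {e}) w)" .
    have "cmod (ZA (A - {e}) w) \<le> cmod (ZA A w) + cmod ?S"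
      using rec norm_triangle_ineq4[of "ZA A w" ?S] by (simp add: algebra_simps)
    then have "exp (-t) * cmod (ZA (A - {e}) w) \<le> cmod (ZA A w)" using Sb by (simp add: algebra_simps)
    then have h: "exp t * (exp (-t) * cmod (ZA (A - {e}) w)) \<le> exp t * cmod (ZA A w)"
      by (rule mult_left_mono) simp
    have eq: "exp t * (exp (-t) * cmod (ZA (A - {e}) w)) = cmod (ZA (A - {e}) w)"
      by (simp add: exp_minus)
    from h have "cmod (ZA (A - {e}) w) \<le> exp t * cmod (ZA A w)" unfolding eq .
    then show ?thesis using nz by blast
  qed
  show ?case
  proof (cases "A = {}")
    case True then show ?thesis by (simp add: ZA_empty)
  next
    case False
    then obtain e where e: "e \<in> A" by blast
    have "ZA A w \<noteq> 0" using step[OF e] by auto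
    then show ?thesis using step unfolding t_def by blast
  qed
qed


lemma holant_eq: "holant_Z V E ends \<pi> w = ZA E w"
  unfolding holant_Z_def ZA_def
proof (rule sum.reindex_bij_witness[of _ "\<lambda>S. restrict (\<lambda>e. e \<in> S) E" "\<lambda>\<sigma>::'e\<Rightarrow>bool. {e\<in>E. \<sigma> e}"])
  fix \<sigma> :: "'e \<Rightarrow> bool" assume s: "\<sigma> \<in> PiE E (\<lambda>_. UNIV)"
  show "restrict (\<lambda>e. e \<in> {e\<in>E. \<sigma> e}) E = \<sigma>"
    using s by (auto simp: restrict_def PiE_def extensional_def)
  show "{e\<in>E. \<sigma> e} \<in> Pow E" by auto
  have m: "map (\<lambda>g. g \<in> {e\<in>E. \<sigma> e}) (sl v) = map \<sigma> (sl v)" for v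
    using set_sl by (intro map_cong) (auto simp: edges_at_def)
  show "W {e\<in>E. \<sigma> e} w = (\<Prod>v\<in>V. sig_fun (\<pi> v) (map \<sigma> (sorted_list_of_set (edges_at E ends v)))) * w ^ card {e\<in>E. \<sigma> e}"
    unfolding W_def sl_def[symmetric] m by (rule refl)
next
  fix S assume S: "S \<in> Pow E"
  show "{e\<in>E. restrict (\<lambda>e. e \<in> S) E e} = S" using S by auto
  show "restrict (\<lambda>e. e \<in> S) E \<in> PiE E (\<lambda>_. UNIV)" by auto
qed

lemma ZA_at0: "ZA E 0 = 1"
proof -
  have "ZA E 0 = W {} 0 + (\<Sum>S\<in>Pow E - {{}}. W S 0)"
    unfolding ZA_def using finE by (subst sum.remove[of _ "{}"]) auto
  also have "(\<Sum>S\<in>Pow E - {{}}. W S 0) = 0"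
  proof (rule sum.neutral, rule ballI)
    fix S assume S: "S \<in> Pow E - {{}}"
    then have "finite S" using finE finite_subset by auto
    then have "card S \<noteq> 0" using S by auto
    then show "W S 0 = 0" by (simp add: W_def)
  qed
  finally show ?thesis by (simp add: W_empty)
qed

end

lemma sig_le_fam:
  assumes F: "finite F" and s: "s \<in> F" and l: "length xs = sig_arity s"
    and nz: "xs \<noteq> replicate (sig_arity s) False"
  shows "cmod (sig_fun s xs) \<le> fam_r F"
proof -
  let ?X = "{cmod (sig_fun s x) | x. length x = sig_arity s \<and> x \<noteq> replicate (sig_arity s) False}"
  have "?X \<subseteq> (\<lambda>x. cmod (sig_fun s x)) ` {xs. set xs \<subseteq> UNIV \<and> length xs = sig_arity s}" by auto
  moreover have "finite {xs::bool list. set xs \<subseteq> UNIV \<and> length xs = sig_arity s}"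
    by (rule finite_lists_length_eq) simp
  ultimately have fX: "finite ?X" using finite_subset by blast
  have "cmod (sig_fun s xs) \<le> sig_r s" unfolding sig_r_def
    using fX l nz by (intro Max_ge) auto
  also have "sig_r s \<le> fam_r F" unfolding fam_r_def using F s by (intro Max_ge) auto
  finally show ?thesis .
qed

theorem mainTheorem5:
  fixes V :: "'v set" and E :: "('e::linorder) set" and ends :: "'e \<Rightarrow> 'v set"
    and F :: "sig set" and \<pi> :: "'v \<Rightarrow> sig" and z :: complex
  assumes "is_graph V E ends"
    and "finite F" and "\<forall>f\<in>F. in_F1 f"
    and "\<forall>v\<in>V. \<pi> v \<in> F \<and> sig_arity (\<pi> v) = card (edges_at E ends v)"
    and "cmod z * (real (max_degree V E ends) * exp 2
            * max 1 (fam_r F) * (max 1 (fam_r F) + 1)) \<le> 1"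
  shows "holant_Z V E ends \<pi> z \<noteq> 0
    \<and> summable (\<lambda>n. cmod (log_taylor_coeff (holant_Z V E ends \<pi>) n * z ^ n))"
proof -
  note G = assms(1) and finF = assms(2) and F1 = assms(3) and pv = assms(4) and hz = assms(5)
  define \<Delta> where "\<Delta> = max_degree V E ends"
  define r1 where "r1 = max 1 (fam_r F)"
  have finV: "finite V" and finE: "finite E" and endsE: "\<forall>g\<in>E. ends g \<subseteq> V \<and> card (ends g) = 2"
    using G by (auto simp: is_graph_def)
  have degb: "\<forall>p. card {g\<in>E. p \<in> ends g} \<le> \<Delta>"
  proof
    fix p show "card {g\<in>E. p \<in> ends g} \<le> \<Delta>"
    proof (cases "p \<in> V")
      case True
      have "card {g\<in>E. p \<in> ends g} = card (edges_at E ends p)" by (simp add: edges_at_def)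
      also have "\<dots> \<le> \<Delta>" unfolding \<Delta>_def max_degree_def using finV True by (intro Max_ge) auto
      finally show ?thesis .
    next
      case False
      then have e: "{g\<in>E. p \<in> ends g} = {}" using endsE by auto
      show ?thesis unfolding e by simp
    qed
  qed
  interpret H: hol V E ends \<pi> r1 \<Delta>
  proof
    show "is_graph V E ends" by (rule G)
    show "\<forall>v\<in>V. sig_fun (\<pi> v) (replicate (card (edges_at E ends v)) False) = 1"
      using pv F1 by (metis in_F1_def)
    show "\<forall>v\<in>V. \<forall>xs. length xs = card (edges_at E ends v)
                \<and> xs \<noteq> replicate (card (edges_at E ends v)) False \<longrightarrow> cmod (sig_fun (\<pi> v) xs) \<le> r1"
    proof (intro ballI allI impI)
      fix v xs assume v: "v \<in> V" and xs: "length xs = card (edges_at E ends v)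
                \<and> xs \<noteq> replicate (card (edges_at E ends v)) False"
      have "cmod (sig_fun (\<pi> v) xs) \<le> fam_r F"
        using sig_le_fam[OF finF, of "\<pi> v" xs] pv v xs by auto
      then show "cmod (sig_fun (\<pi> v) xs) \<le> r1" unfolding r1_def by linarith
    qed
    show "r1 \<ge> 1" unfolding r1_def by simp
    show "\<forall>p. card {g\<in>E. p \<in> ends g} \<le> \<Delta>" by (rule degb)
  qed
  define Z where "Z = holant_Z V E ends \<pi>"
  have Zeq: "Z w = H.ZA E w" for w unfolding Z_def by (rule H.holant_eq)
  define K where "K = real \<Delta> * exp 2 * r1 * (r1 + 1)"
  have K0: "K \<ge> 0" using H.r1 by (simp add: K_def)
  have hzK: "cmod z * K \<le> 1" using hz unfolding K_def \<Delta>_def r1_def .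
  have nzall: "Z w \<noteq> 0" if "cmod w * K \<le> 1" for w
  proof (cases "\<Delta> = 0")
    case True
    then have "E = {}"
    proof -
      have "g \<notin> E" for g
      proof
        assume g: "g \<in> E"
        then have "card (ends g) = 2" using endsE by blast
        then obtain p where p: "p \<in> ends g" by (metis card.empty ex_in_conv zero_neq_numeral)
        have "card {g\<in>E. p \<in> ends g} \<le> 0" using degb True by metis
        moreover have "g \<in> {g\<in>E. p \<in> ends g}" using g p by simp
        moreover have "finite {g\<in>E. p \<in> ends g}" using finE by simp
        ultimately show False using card_gt_0_iff[of "{g\<in>E. p \<in> ends g}"] by auto
      qed
      then show ?thesis by blast
    qed
    then show ?thesis using Zeq H.ZA_empty by simp
  next
    case False
    then have "\<Delta> \<ge> 1" by simp
    from H.main_ratio[OF this, of w E] that show ?thesis using Zeq by (simp add: K_def)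
  qed
  have hol: "Z holomorphic_on UNIV" unfolding Z_def holant_Z_def by (intro holomorphic_intros)
  have Z0: "Z 0 = 1" using Zeq H.ZA_at0 by simp
  obtain R where R: "cmod z < R" "\<And>w. w \<in> ball 0 R \<Longrightarrow> Z w \<noteq> 0"
  proof (cases "K = 0")
    case True
    show ?thesis by (rule that[of "cmod z + 1"]) (use nzall True in auto)
  next
    case False
    then have Kp: "K > 0" using K0 by simp
    define r0 where "r0 = 1 / K"
    have zr0: "cmod z \<le> r0" using hzK Kp by (simp add: r0_def field_simps)
    have cb: "cball 0 r0 \<subseteq> {w. Z w \<noteq> 0}"
    proof
      fix w assume "w \<in> cball (0::complex) r0"
      then have "cmod w \<le> r0" by simp
      then have "cmod w * K \<le> 1" using Kp by (simp add: r0_def field_simps)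
      then show "w \<in> {w. Z w \<noteq> 0}" using nzall by simp
    qed
    have op: "open {w. Z w \<noteq> 0}"
      using hol by (intro open_Collect_neq) (auto intro: holomorphic_on_imp_continuous_on continuous_intros)
    obtain \<epsilon> where \<epsilon>: "\<epsilon> > 0" "(\<Union>x\<in>cball 0 r0. ball x \<epsilon>) \<subseteq> {w. Z w \<noteq> 0}"
      using compact_subset_open_imp_ball_epsilon_subset[OF compact_cball op cb] by blast
    show ?thesis
    proof (rule that[of "r0 + \<epsilon>"])
      show "cmod z < r0 + \<epsilon>" using zr0 \<epsilon> by simp
      fix w assume w: "w \<in> ball (0::complex) (r0 + \<epsilon>)"
      show "Z w \<noteq> 0"
      proof (cases "cmod w \<le> r0")
        case True then show ?thesis using cb by auto
      next
        case False
        define w' where "w' = (r0 / cmod w) *\<^sub>R w"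
        have r0p: "r0 \<ge> 0" using Kp by (simp add: r0_def)
        have wpos: "cmod w > 0" using False r0p by linarith
        have nw': "cmod w' = r0" using wpos r0p by (simp add: w'_def)
        have "w - w' = (1 - r0 / cmod w) *\<^sub>R w" by (simp add: w'_def algebra_simps)
        moreover have "r0 / cmod w < 1" using False wpos by (simp add: field_simps)
        ultimately have "cmod (w - w') = (1 - r0 / cmod w) * cmod w"
          by (simp add: norm_scaleR)
        also have "\<dots> = cmod w - r0" using wpos by (simp add: field_simps)
        finally have "dist w' w < \<epsilon>" using w by (simp add: dist_norm norm_minus_commute)
        then have "w \<in> (\<Union>x\<in>cball 0 r0. ball x \<epsilon>)" using nw' by auto
        then show ?thesis using \<epsilon>(2) by blast
      qed
    qed
  qed
  have "Z z \<noteq> 0" using nzall hzK by blast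
  moreover have "summable (\<lambda>n. cmod ((deriv ^^ n) (\<lambda>w. Ln (Z w)) 0 / fact n * z ^ n))"
    by (rule log_series_summable[OF hol Z0 R(1) R(2)])
  ultimately show ?thesis unfolding Z_def log_taylor_coeff_def by simp
qed


end
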